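(* Let $P$ be the uniform probability measure on $[0,1]$, $Q$ a probability measure on $[0,1]$ with unimodal density $r = dQ/dP$, maximiser $x^*$ and $r_{max}=\sup r<\infty$. Then for any $\gamma\in[0,1]$, the total number of steps $T$ of AS* satisfies $$\mathbb{E}[T] \le 2\alpha\left(\log\frac{1}{w(\gamma)} + 2\log\frac1\gamma\right) + 22, \qquad \alpha = \left(\log\tfrac43\right)^{-1}.$$
   Context: Unimodal: $r$ non-decreasing on $[0,x^*]$, non-increasing on $[x^*,1]$, $r(x^* ) = r_{max}$. $S(\gamma) = \{x\in[0,1] : r(x)\ge\gamma r_{max}\}$ and $w(\gamma) = \inf\{\delta\in[0,1] : \exists z\in[0,1],\ S(\gamma)\subseteq[z,z+\delta]\}$; $\log(1/0)=+\infty$. $\mathrm{TG}(\mu,\kappa)$ is the unit-scale Gumbel with location $\mu$ truncated to $(-\infty,\kappa]$ (density $\propto \exp(-(g-\mu)-e^{-(g-\mu)})$ on $g\le\kappa$). AS*: $B_1=[0,1]$, $G_0=+\infty$; for every $n\ge1$ draw $G_n\sim\mathrm{TG}(\log P(B_n),G_{n-1})$ and independently $X_n\sim P(\cdot\cap B_n)/P(B_n)$; set $L_n=\max_{k\le n}(\log r(X_k)+G_k)$, $U_n=\log r_{max}+G_n$, and $B_{n+1}=[\max(\{0\}\cup\{X_k:k\le n,X_k\le x^*\}),\ \min(\{1\}\cup\{X_k:k\le n,X_k\ge x^*\})]$. The total number of steps is $T=\min\{n\ge1: L_n\ge U_n\}$. *)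

theory Defs
  imports "HOL-Probability.Probability"
begin

definition unifP :: "real measure" where
  "unifP = uniform_measure lborel {0..1}"

text \<open>Quantile function of the truncated Gumbel TG(mu, kappa) (unit scale, location mu,
  truncated to (-infinity, kappa]); kappa = +infinity means no truncation.
  The CDF on g \<le> kappa is exp(exp(mu-kappa) - exp(mu-g)); inverting at level u gives
  g = mu - ln(exp(mu-kappa) - ln u).  Applied to a uniform u in (0,1) it yields a
  TG(mu,kappa) sample.\<close>
definition tg_quantile :: "real \<Rightarrow> ereal \<Rightarrow> real \<Rightarrow> real" where
  "tg_quantile mu kappa u =
     (case kappa of ereal k \<Rightarrow> mu - ln (exp (mu - k) - ln u)
                  | _ \<Rightarrow> mu - ln (- ln u))"

definition logr :: "(real \<Rightarrow> real) \<Rightarrow> real \<Rightarrow> ereal" where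
  "logr r x = (if r x > 0 then ereal (ln (r x)) else - \<infinity>)"

text \<open>State of AS* after n steps: (a, b, G_n, L_n), where B_{n+1} = [a,b].
  Step n+1 uses the independent uniforms omega n = (u, v):
  G_{n+1} = TG-quantile(log P(B_{n+1}), G_n; u), X_{n+1} = a + (b-a) v (uniform on B_{n+1}).
  (The degenerate case b \<le> a has probability zero; there G is set to the truncation point.)\<close>
primrec as_state :: "(real \<Rightarrow> real) \<Rightarrow> real \<Rightarrow> (nat \<Rightarrow> real \<times> real) \<Rightarrow> nat
                     \<Rightarrow> real \<times> real \<times> ereal \<times> ereal" where
  "as_state r xs \<omega> 0 = (0, 1, \<infinity>, - \<infinity>)"
| "as_state r xs \<omega> (Suc n) =
     (let (a, b, g, L) = as_state r xs \<omega> n;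
          (u, v) = \<omega> n;
          G = (if a < b then ereal (tg_quantile (ln (b - a)) g u) else g);
          X = a + (b - a) * v;
          L' = max L (logr r X + G);
          a' = (if X \<le> xs then max a X else a);
          b' = (if X \<ge> xs then min b X else b)
      in (a', b', G, L'))"

definition as_G :: "(real \<Rightarrow> real) \<Rightarrow> real \<Rightarrow> (nat \<Rightarrow> real \<times> real) \<Rightarrow> nat \<Rightarrow> ereal" where
  "as_G r xs \<omega> n = fst (snd (snd (as_state r xs \<omega> n)))"

definition as_L :: "(real \<Rightarrow> real) \<Rightarrow> real \<Rightarrow> (nat \<Rightarrow> real \<times> real) \<Rightarrow> nat \<Rightarrow> ereal" where
  "as_L r xs \<omega> n = snd (snd (snd (as_state r xs \<omega> n)))"

definition as_stop :: "(real \<Rightarrow> real) \<Rightarrow> real \<Rightarrow> real \<Rightarrow> (nat \<Rightarrow> real \<times> real) \<Rightarrow> nat \<Rightarrow> bool" where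
  "as_stop r xs rmax \<omega> n \<longleftrightarrow> as_L r xs \<omega> n \<ge> ereal (ln rmax) + as_G r xs \<omega> n"

definition as_T :: "(real \<Rightarrow> real) \<Rightarrow> real \<Rightarrow> real \<Rightarrow> (nat \<Rightarrow> real \<times> real) \<Rightarrow> ennreal" where
  "as_T r xs rmax \<omega> =
     (if \<exists>n\<ge>1. as_stop r xs rmax \<omega> n
      then of_nat (LEAST n. n \<ge> 1 \<and> as_stop r xs rmax \<omega> n) else \<infinity>)"

definition rand_space :: "(nat \<Rightarrow> real \<times> real) measure" where
  "rand_space = PiM (UNIV :: nat set) (\<lambda>_. unifP \<Otimes>\<^sub>M unifP)"

definition S_level :: "(real \<Rightarrow> real) \<Rightarrow> real \<Rightarrow> real \<Rightarrow> real set" where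
  "S_level r rmax \<gamma> = {x \<in> {0..1}. r x \<ge> \<gamma> * rmax}"

definition w_width :: "(real \<Rightarrow> real) \<Rightarrow> real \<Rightarrow> real \<Rightarrow> real" where
  "w_width r rmax \<gamma> = Inf {\<delta> \<in> {0..1}. \<exists>z \<in> {0..1}. S_level r rmax \<gamma> \<subseteq> {z..z+\<delta>}}"

definition log_inv :: "real \<Rightarrow> ennreal" where
  "log_inv x = (if x = 0 then \<infinity> else ennreal (ln (1 / x)))"

end

theory Submission
  imports Defs
begin

abbreviation "M0 \<equiv> unifP \<Otimes>\<^sub>M unifP"

lemma prob_unifP: "prob_space unifP"
  unfolding unifP_def by (intro prob_space_uniform_measure) auto

lemma prob_M0: "prob_space M0"
  by (intro prob_space_pair prob_unifP)

lemma sets_unifP[measurable_cong]: "sets unifP = sets borel"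
  unfolding unifP_def by simp

lemma space_unifP[simp]: "space unifP = UNIV"
  unfolding unifP_def by simp

lemma space_M0[simp]: "space M0 = UNIV"
  by (simp add: space_pair_measure)

lemma space_rand[simp]: "space rand_space = UNIV"
  unfolding rand_space_def by (simp add: space_PiM)

lemma prob_rand: "prob_space rand_space"
  unfolding rand_space_def by (intro prob_space_PiM prob_M0)

lemma coord_int:
  assumes f[measurable]: "f \<in> borel_measurable rand_space"
  shows "(\<integral>\<^sup>+w. f w \<partial>rand_space) = (\<integral>\<^sup>+w. (\<integral>\<^sup>+x. f (w(i:=x)) \<partial>M0) \<partial>rand_space)"
proof -
  interpret M0: prob_space M0 by (rule prob_M0)
  interpret R: prob_space rand_space by (rule prob_rand)
  interpret P: pair_sigma_finite M0 rand_space by unfold_locales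
  have D: "distr (M0 \<Otimes>\<^sub>M rand_space) rand_space (\<lambda>(x,X). X(i:=x)) = rand_space"
    using distr_pair_PiM_eq_PiM[of UNIV "\<lambda>_. M0" i] prob_M0 unfolding rand_space_def by simp
  have g: "(\<lambda>(x,X). X(i:=x)) \<in> measurable (M0 \<Otimes>\<^sub>M rand_space) rand_space"
  proof -
    have "(\<lambda>z. (snd z)(i := fst z)) \<in> measurable (M0 \<Otimes>\<^sub>M rand_space) rand_space"
      unfolding rand_space_def
      by (rule measurable_fun_upd[where J=UNIV]) auto
    then show ?thesis by (simp add: case_prod_beta')
  qed
  have "(\<integral>\<^sup>+w. f w \<partial>rand_space) = (\<integral>\<^sup>+w. f w \<partial>distr (M0 \<Otimes>\<^sub>M rand_space) rand_space (\<lambda>(x,X). X(i:=x)))"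
    by (simp add: D)
  also have "\<dots> = (\<integral>\<^sup>+z. f ((\<lambda>(x,X). X(i:=x)) z) \<partial>(M0 \<Otimes>\<^sub>M rand_space))"
    by (rule nn_integral_distr[OF g]) simp
  also have "\<dots> = (\<integral>\<^sup>+w. (\<integral>\<^sup>+x. f (w(i:=x)) \<partial>M0) \<partial>rand_space)"
    apply (subst P.nn_integral_snd[symmetric])
    using g by auto
  finally show ?thesis .
qed

lemma upd_meas:
  "(\<lambda>(w,u). w(i := (u, snd (w i)))) \<in> measurable (rand_space \<Otimes>\<^sub>M unifP) rand_space"
proof -
  have "(\<lambda>z. (fst z)(i := (snd z, snd (fst z i)))) \<in> measurable (rand_space \<Otimes>\<^sub>M unifP) rand_space"
    unfolding rand_space_def
    by (rule measurable_fun_upd[where J=UNIV]) auto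
  then show ?thesis by (simp add: case_prod_beta')
qed

lemma u_int:
  assumes f[measurable]: "f \<in> borel_measurable rand_space"
  shows "(\<integral>\<^sup>+w. f w \<partial>rand_space) = (\<integral>\<^sup>+w. (\<integral>\<^sup>+u. f (w(i:=(u, snd (w i)))) \<partial>unifP) \<partial>rand_space)"
proof -
  interpret U: prob_space unifP by (rule prob_unifP)
  interpret UU: pair_prob_space unifP unifP by unfold_locales
  interpret RU: pair_sigma_finite rand_space unifP
    using prob_rand by (simp add: pair_sigma_finite_def prob_space_imp_sigma_finite U.sigma_finite_measure_axioms)
  have m1: "(\<lambda>(w,u). f (w(i := (u, snd (w i))))) \<in> borel_measurable (rand_space \<Otimes>\<^sub>M unifP)"
    using measurable_comp[OF upd_meas f] by (simp add: o_def case_prod_beta')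
  have g[measurable]: "(\<lambda>w. \<integral>\<^sup>+u. f (w(i:=(u, snd (w i)))) \<partial>unifP) \<in> borel_measurable rand_space"
    using m1 by (rule U.borel_measurable_nn_integral)
  have fi: "(\<lambda>(u,v). f (w(i:=(u,v)))) \<in> borel_measurable M0" for w
  proof -
    have "(\<lambda>y. w(i:=y)) \<in> measurable M0 rand_space"
      unfolding rand_space_def
      by (rule measurable_fun_upd[where J=UNIV]) (auto simp flip: rand_space_def)
    from measurable_comp[OF this f] show ?thesis by (simp add: o_def case_prod_beta')
  qed
  have inner: "(\<integral>\<^sup>+y. f (w(i:=y)) \<partial>M0) = (\<integral>\<^sup>+y. (\<integral>\<^sup>+u. f ((w(i:=y))(i:=(u, snd ((w(i:=y)) i)))) \<partial>unifP) \<partial>M0)" for w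
  proof -
    have "(\<integral>\<^sup>+y. f (w(i:=y)) \<partial>M0) = (\<integral>\<^sup>+v. (\<integral>\<^sup>+u. f (w(i:=(u,v))) \<partial>unifP) \<partial>unifP)"
      using UU.nn_integral_snd[of "\<lambda>y. f (w(i:=y))"] fi[of w] by (simp add: case_prod_beta')
    also have "\<dots> = (\<integral>\<^sup>+u'. (\<integral>\<^sup>+v. (\<integral>\<^sup>+u. f (w(i:=(u,v))) \<partial>unifP) \<partial>unifP) \<partial>unifP)"
      using U.emeasure_space_1 by simp
    also have "\<dots> = (\<integral>\<^sup>+y. (\<integral>\<^sup>+u. f (w(i:=(u,snd y))) \<partial>unifP) \<partial>M0)"
    proof -
      have mm: "(\<lambda>x. (snd x, snd (fst x))) \<in> measurable (M0 \<Otimes>\<^sub>M unifP) M0" by measurable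
      have "(\<lambda>(y,u). f (w(i:=(u,snd y)))) \<in> borel_measurable (M0 \<Otimes>\<^sub>M unifP)"
        using measurable_comp[OF mm fi[of w]] by (simp add: o_def case_prod_beta')
      then have "(\<lambda>y. \<integral>\<^sup>+u. f (w(i:=(u,snd y))) \<partial>unifP) \<in> borel_measurable M0"
        by (intro U.borel_measurable_nn_integral[of "\<lambda>y u. f (w(i:=(u,snd y)))"]) simp
      from U.nn_integral_fst[OF this] show ?thesis by simp
    qed
    finally show ?thesis by simp
  qed
  show ?thesis
    apply (subst coord_int[OF f, of i])
    apply (subst coord_int[OF g, of i])
    apply (simp add: inner)
    done
qed

definition abstep :: "real \<Rightarrow> real \<times> real \<Rightarrow> real \<Rightarrow> real \<times> real" where
  "abstep xs ab v = (let a = fst ab; b = snd ab; X = a + (b - a) * v in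
     (if X \<le> xs then max a X else a, if X \<ge> xs then min b X else b))"

primrec abseq :: "real \<Rightarrow> (nat \<Rightarrow> real \<times> real) \<Rightarrow> nat \<Rightarrow> real \<times> real" where
  "abseq xs w 0 = (0, 1)"
| "abseq xs w (Suc n) = abstep xs (abseq xs w n) (snd (w n))"

definition "Dw xs w n = snd (abseq xs w n) - fst (abseq xs w n)"
definition "Xp xs w n = fst (abseq xs w n) + Dw xs w n * snd (w n)"
definition "Ew w j = - ln (fst (w j))"

lemma as_state_Suc:
  "as_state r xs w (Suc n) =
    (let a = fst (as_state r xs w n); b = fst (snd (as_state r xs w n));
         g = fst (snd (snd (as_state r xs w n))); L = snd (snd (snd (as_state r xs w n)));
         G = (if a < b then ereal (tg_quantile (ln (b - a)) g (fst (w n))) else g);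
         X = a + (b - a) * snd (w n)
     in (if X \<le> xs then max a X else a, if X \<ge> xs then min b X else b, G, max L (logr r X + G)))"
  by (cases "as_state r xs w n"; cases "w n") (simp add: Let_def)

declare as_state.simps(2)[simp del]

lemma as_ab: "fst (as_state r xs w n) = fst (abseq xs w n) \<and> fst (snd (as_state r xs w n)) = snd (abseq xs w n)"
  by (induction n) (simp_all add: as_state_Suc abstep_def Let_def)

lemma as_G_Suc: "as_G r xs w (Suc n) =
   (if fst (abseq xs w n) < snd (abseq xs w n)
    then ereal (tg_quantile (ln (Dw xs w n)) (as_G r xs w n) (fst (w n))) else as_G r xs w n)"
  using as_ab[of r xs w n] by (simp add: as_G_def as_state_Suc Let_def Dw_def)

lemma as_L_Suc: "as_L r xs w (Suc n) = max (as_L r xs w n) (logr r (Xp xs w n) + as_G r xs w (Suc n))"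
  using as_ab[of r xs w n] by (simp add: as_L_def as_G_def as_state_Suc Let_def Dw_def Xp_def)

lemma as_G_0: "as_G r xs w 0 = \<infinity>" by (simp add: as_G_def)

lemma ab_inv:
  assumes "0 \<le> xs" "xs \<le> 1"
  shows "0 \<le> fst (abseq xs w n) \<and> fst (abseq xs w n) \<le> xs \<and> xs \<le> snd (abseq xs w n) \<and> snd (abseq xs w n) \<le> 1"
  using assms by (induction n) (auto simp: abstep_def Let_def)

lemma Dw_nonneg: "0 \<le> xs \<Longrightarrow> xs \<le> 1 \<Longrightarrow> 0 \<le> Dw xs w n"
  using ab_inv[of xs w n] by (simp add: Dw_def)

lemma Dw_le1: "0 \<le> xs \<Longrightarrow> xs \<le> 1 \<Longrightarrow> Dw xs w n \<le> 1"
  using ab_inv[of xs w n] by (simp add: Dw_def)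

lemma Dw_0[simp]: "Dw xs w 0 = 1" by (simp add: Dw_def)

definition phi :: "real \<Rightarrow> real \<Rightarrow> real" where
  "phi p v = (if v \<le> p then 1 - v else v)"

lemma Dw_Suc_le:
  assumes "0 \<le> xs" "xs \<le> 1"
  shows "Dw xs w (Suc n) \<le> Dw xs w n * phi ((xs - fst (abseq xs w n)) / Dw xs w n) (snd (w n))"
proof -
  define a where "a = fst (abseq xs w n)"
  define b where "b = snd (abseq xs w n)"
  define v where "v = snd (w n)"
  have ab: "a \<le> xs" "xs \<le> b" using ab_inv[OF assms, of w n] by (auto simp: a_def b_def)
  have D: "Dw xs w n = b - a" by (simp add: Dw_def a_def b_def)
  have DS: "Dw xs w (Suc n) = (if a + (b - a) * v \<ge> xs then min b (a + (b - a) * v) else b) - (if a + (b - a) * v \<le> xs then max a (a + (b - a) * v) else a)"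
    by (simp add: Dw_def abstep_def Let_def a_def b_def v_def)
  show ?thesis
  proof (cases "b - a = 0")
    case True
    then show ?thesis using DS D ab by (auto simp: phi_def)
  next
    case False
    then have pos: "b - a > 0" using ab by simp
    have iff: "v \<le> (xs - a) / (b - a) \<longleftrightarrow> a + (b - a) * v \<le> xs"
      using pos by (simp add: pos_le_divide_eq algebra_simps)
    show ?thesis
      unfolding DS D phi_def v_def[symmetric] a_def[symmetric]
      using iff pos ab by (auto simp: algebra_simps)
  qed
qed

lemma tg_exp_fin:
  assumes "D > 0" "0 < u" "u < 1"
  shows "exp (- tg_quantile (ln D) (ereal g) u) = exp (- g) + (- ln u) / D"
proof -
  have lu: "ln u < 0" using assms by simp
  have pos: "exp (ln D - g) - ln u > 0" using lu by (smt (verit) exp_gt_zero)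
  have "exp (- tg_quantile (ln D) (ereal g) u) = exp (- ln D) * exp (ln (exp (ln D - g) - ln u))"
    by (simp add: tg_quantile_def exp_add[symmetric] exp_diff)
  also have "\<dots> = (1 / D) * (exp (ln D - g) - ln u)"
    using pos assms by (simp add: exp_minus inverse_eq_divide)
  also have "\<dots> = exp (- g) + (- ln u) / D"
    using assms by (simp add: exp_diff field_simps exp_minus)
  finally show ?thesis .
qed

lemma tg_exp_inf:
  assumes "0 < u" "u < 1"
  shows "exp (- tg_quantile 0 \<infinity> u) = - ln u"
proof -
  have lu: "ln u < 0" using assms by simp
  show ?thesis using lu by (simp add: tg_quantile_def)
qed

context
  fixes r :: "real \<Rightarrow> real" and xs :: real and w :: "nat \<Rightarrow> real \<times> real"
  assumes xs01: "0 \<le> xs" "xs \<le> 1"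
  and U: "\<And>n. 0 < fst (w n) \<and> fst (w n) < 1"
begin

lemma Ew_nonneg: "0 \<le> Ew w j"
  using U[of j] by (simp add: Ew_def)

lemma G_fin_bound:
  "n \<ge> 1 \<Longrightarrow> \<exists>g. as_G r xs w n = ereal g \<and> exp (- g) \<le> (\<Sum>j<n. Ew w j / Dw xs w j)"
proof (induction n rule: nat_induct_at_least)
  case base
  have "as_G r xs w 1 = ereal (tg_quantile 0 \<infinity> (fst (w 0)))"
    by (simp add: as_G_Suc[where n=0, simplified] as_G_0 Dw_def)
  then show ?case using tg_exp_inf[of "fst (w 0)"] U[of 0] by (auto simp: Ew_def)
next
  case (Suc n)
  then obtain g where g: "as_G r xs w n = ereal g" "exp (- g) \<le> (\<Sum>j<n. Ew w j / Dw xs w j)" by auto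
  have t: "Ew w n / Dw xs w n \<ge> 0" using Ew_nonneg Dw_nonneg[OF xs01] by simp
  show ?case
  proof (cases "fst (abseq xs w n) < snd (abseq xs w n)")
    case True
    then have D: "Dw xs w n > 0" by (simp add: Dw_def)
    have "as_G r xs w (Suc n) = ereal (tg_quantile (ln (Dw xs w n)) (ereal g) (fst (w n)))"
      using True g by (simp add: as_G_Suc)
    moreover have "exp (- tg_quantile (ln (Dw xs w n)) (ereal g) (fst (w n))) = exp (-g) + Ew w n / Dw xs w n"
      using tg_exp_fin[OF D, of "fst (w n)" g] U[of n] by (simp add: Ew_def)
    ultimately show ?thesis using g by auto
  next
    case False
    then show ?thesis using g t by (auto simp: as_G_Suc intro: add_increasing2)
  qed
qed

lemma G_fin: "n \<ge> 1 \<Longrightarrow> as_G r xs w n = ereal (real_of_ereal (as_G r xs w n))"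
  using G_fin_bound by fastforce

lemma G_Suc_bound:
  assumes "n \<ge> 1" "Dw xs w n > 0"
  shows "exp (- real_of_ereal (as_G r xs w (Suc n))) \<ge> Ew w n / Dw xs w n"
proof -
  obtain g where g: "as_G r xs w n = ereal g" using G_fin[OF assms(1)] by blast
  have True: "fst (abseq xs w n) < snd (abseq xs w n)" using assms(2) by (simp add: Dw_def)
  have "as_G r xs w (Suc n) = ereal (tg_quantile (ln (Dw xs w n)) (ereal g) (fst (w n)))"
    using True g by (simp add: as_G_Suc)
  moreover have "exp (- tg_quantile (ln (Dw xs w n)) (ereal g) (fst (w n))) = exp (-g) + Ew w n / Dw xs w n"
    using tg_exp_fin[OF assms(2), of "fst (w n)" g] U[of n] by (simp add: Ew_def)
  ultimately show ?thesis by (simp add: add_increasing)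
qed

end

lemma L_mono: "m \<le> n \<Longrightarrow> as_L r xs w m \<le> as_L r xs w n"
  by (induction n rule: dec_induct) (auto simp: as_L_Suc le_max_iff_disj)

lemma L_ge: "logr r (Xp xs w k) + as_G r xs w (Suc k) \<le> as_L r xs w (Suc k)"
  by (simp add: as_L_Suc)

definition "hit xs S w m = (\<exists>k<m. Xp xs w k \<in> S)"

definition "Shat xs S w m = (\<Sum>j<m. (if hit xs S w j then 0 else Ew w j / Dw xs w j))"

lemma S_sub:
  assumes xs01: "0 \<le> xs" "xs \<le> 1"
    and r_inc: "mono_on {0..xs} r" and r_dec: "antimono_on {xs..1} r"
  shows "\<not> hit xs (S_level r rmax \<gamma>) w m \<Longrightarrow> S_level r rmax \<gamma> \<subseteq> {fst (abseq xs w m) .. snd (abseq xs w m)}"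
proof (induction m)
  case 0
  then show ?case by (auto simp: S_level_def)
next
  case (Suc m)
  let ?S = "S_level r rmax \<gamma>"
  have nh: "\<not> hit xs ?S w m" and nX: "Xp xs w m \<notin> ?S"
    using Suc.prems by (auto simp: hit_def)
  have IH: "?S \<subseteq> {fst (abseq xs w m) .. snd (abseq xs w m)}" using Suc.IH nh by blast
  define a where "a = fst (abseq xs w m)"
  define b where "b = snd (abseq xs w m)"
  define X where "X = Xp xs w m"
  have inv: "0 \<le> a" "a \<le> xs" "xs \<le> b" "b \<le> 1" using ab_inv[OF xs01, of w m] by (auto simp: a_def b_def)
  have Xdef: "X = a + (b - a) * snd (w m)" by (simp add: X_def Xp_def Dw_def a_def b_def)
  have step: "abseq xs w (Suc m) = (if X \<le> xs then max a X else a, if X \<ge> xs then min b X else b)"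
    by (simp add: abstep_def Let_def Xdef a_def b_def)
  show ?case
  proof
    fix s assume s: "s \<in> ?S"
    then have s01: "0 \<le> s" "s \<le> 1" and rs: "r s \<ge> \<gamma> * rmax" by (auto simp: S_level_def)
    have sab: "a \<le> s" "s \<le> b" using IH s by (auto simp: a_def b_def)
    have L: "X \<le> s" if "X \<le> xs"
    proof (rule ccontr)
      assume "\<not> X \<le> s"
      then have "s < X" by simp
      then have "r s \<le> r X" using r_inc that s01 by (intro mono_onD[OF r_inc]) auto
      then have "X \<in> ?S" using rs s01 \<open>s < X\<close> that xs01 by (auto simp: S_level_def)
      then show False using nX X_def by simp
    qed
    have R: "s \<le> X" if "X \<ge> xs"
    proof (rule ccontr)
      assume "\<not> s \<le> X"
      then have "X < s" by simp
      then have "r s \<le> r X" using that s01 xs01 using monotone_onD[OF r_dec, of X s] by auto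
      then have "X \<in> ?S" using rs s01 \<open>X < s\<close> that xs01 by (auto simp: S_level_def)
      then show False using nX X_def by simp
    qed
    show "s \<in> {fst (abseq xs w (Suc m)) .. snd (abseq xs w (Suc m))}"
      unfolding step using L R sab by auto
  qed
qed

lemma w_le_D:
  assumes xs01: "0 \<le> xs" "xs \<le> 1"
    and r_inc: "mono_on {0..xs} r" and r_dec: "antimono_on {xs..1} r"
    and nh: "\<not> hit xs (S_level r rmax \<gamma>) w m"
  shows "w_width r rmax \<gamma> \<le> Dw xs w m"
  unfolding w_width_def
proof (rule cInf_lower)
  have inv: "0 \<le> fst (abseq xs w m)" "fst (abseq xs w m) \<le> xs" "xs \<le> snd (abseq xs w m)" "snd (abseq xs w m) \<le> 1"
    using ab_inv[OF xs01, of w m] by auto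
  show "Dw xs w m \<in> {\<delta> \<in> {0..1}. \<exists>z\<in>{0..1}. S_level r rmax \<gamma> \<subseteq> {z..z + \<delta>}}"
    using S_sub[OF assms] inv by (auto simp: Dw_def intro!: bexI[of _ "fst (abseq xs w m)"])
  show "bdd_below {\<delta> \<in> {0..1}. \<exists>z\<in>{0..1}. S_level r rmax \<gamma> \<subseteq> {z..z + \<delta>}}"
    by (rule bdd_belowI[of _ 0]) auto
qed

lemma stop_lemma:
  assumes xs01: "0 \<le> xs" "xs \<le> 1"
    and U: "\<And>n. 0 < fst (w n) \<and> fst (w n) < 1"
    and r_xs: "r xs = rmax" and rpos: "rmax > 0" and g: "0 < \<gamma>" "\<gamma> \<le> 1"
    and h: "hit xs (S_level r rmax \<gamma>) w m" and mn: "m < n"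
    and E: "Ew w (n - 1) \<ge> Dw xs w (n - 1) * Shat xs (S_level r rmax \<gamma>) w m / \<gamma>"
  shows "as_stop r xs rmax w n"
proof -
  let ?S = "S_level r rmax \<gamma>"
  have "\<exists>k. k < m \<and> Xp xs w k \<in> ?S" using h by (auto simp: hit_def)
  then obtain k0 where k0: "k0 < m" "Xp xs w k0 \<in> ?S" "\<And>k. k < k0 \<Longrightarrow> Xp xs w k \<notin> ?S"
    using exists_least_iff[of "\<lambda>k. k < m \<and> Xp xs w k \<in> ?S"] by (metis less_trans)
  define g1 where "g1 = real_of_ereal (as_G r xs w (Suc k0))"
  obtain g1' where g1': "as_G r xs w (Suc k0) = ereal g1'" "exp (- g1') \<le> (\<Sum>j<Suc k0. Ew w j / Dw xs w j)"
    using G_fin_bound[where w=w and r=r and n="Suc k0", OF xs01 U] by auto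
  have "(\<Sum>j<Suc k0. Ew w j / Dw xs w j) = (\<Sum>j<Suc k0. (if hit xs ?S w j then 0 else Ew w j / Dw xs w j))"
    using k0(3) by (intro sum.cong) (auto simp: hit_def)
  also have "\<dots> \<le> Shat xs ?S w m"
    unfolding Shat_def using k0(1)
    by (intro sum_mono2) (auto intro!: divide_nonneg_nonneg Ew_nonneg[where w=w, OF xs01 U] Dw_nonneg[OF xs01])
  finally have g1S: "exp (- g1') \<le> Shat xs ?S w m" using g1'(2) by linarith
  have rX: "r (Xp xs w k0) \<ge> \<gamma> * rmax" using k0(2) by (simp add: S_level_def)
  have rXpos: "r (Xp xs w k0) > 0" using rX g rpos by (smt (verit) mult_pos_pos)
  have Lk: "ereal (ln (r (Xp xs w k0)) + g1') \<le> as_L r xs w n"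
  proof -
    have "ereal (ln (r (Xp xs w k0)) + g1') = logr r (Xp xs w k0) + as_G r xs w (Suc k0)"
      using rXpos g1' by (simp add: logr_def)
    also have "\<dots> \<le> as_L r xs w (Suc k0)" by (rule L_ge)
    also have "\<dots> \<le> as_L r xs w n" using k0(1) mn by (intro L_mono) auto
    finally show ?thesis .
  qed
  obtain n' where n': "n = Suc n'" using mn by (cases n) auto
  have mn': "m \<le> n'" using mn n' by simp
  show ?thesis
  proof (cases "Dw xs w n' = 0")
    case True
    have inv: "fst (abseq xs w n') \<le> xs" "xs \<le> snd (abseq xs w n')" using ab_inv[OF xs01, of w n'] by auto
    then have eq: "fst (abseq xs w n') = xs" "snd (abseq xs w n') = xs" using True by (auto simp: Dw_def)
    have X: "Xp xs w n' = xs" using eq True by (simp add: Xp_def)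
    have Gn: "as_G r xs w n = as_G r xs w n'" using eq by (simp add: n' as_G_Suc)
    have "ereal (ln rmax) + as_G r xs w n = logr r (Xp xs w n') + as_G r xs w (Suc n')"
      using X r_xs rpos by (simp add: logr_def n')
    also have "\<dots> \<le> as_L r xs w n" using L_ge n' by simp
    finally show ?thesis by (simp add: as_stop_def)
  next
    case False
    then have Dpos: "Dw xs w n' > 0" using Dw_nonneg[OF xs01, of w n'] by simp
    have n'1: "n' \<ge> 1" using k0(1) mn' by simp
    define gn where "gn = real_of_ereal (as_G r xs w n)"
    have Gn: "as_G r xs w n = ereal gn" using G_fin[where w=w and r=r and n=n, OF xs01 U] n' by (simp add: gn_def)
    have "exp (- gn) \<ge> Ew w n' / Dw xs w n'"
      using G_Suc_bound[where w=w and r=r, OF xs01 U n'1 Dpos] by (simp add: gn_def n')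
    moreover have "Ew w n' / Dw xs w n' \<ge> Shat xs ?S w m / \<gamma>"
      using E Dpos n' by (simp add: pos_le_divide_eq mult.commute)
    ultimately have "exp (- gn) \<ge> exp (- g1') / \<gamma>" using g1S g
      by (smt (verit, ccfv_SIG) divide_right_mono)
    then have "- gn \<ge> - g1' - ln \<gamma>"
      using g by (metis exp_diff exp_ln exp_le_cancel_iff)
    moreover have "ln (r (Xp xs w k0)) \<ge> ln \<gamma> + ln rmax"
    proof -
      have "ln \<gamma> + ln rmax = ln (\<gamma> * rmax)" using g rpos by (simp add: ln_mult)
      also have "\<dots> \<le> ln (r (Xp xs w k0))" using rX g rpos by (intro ln_mono) auto
      finally show ?thesis .
    qed
    ultimately have "ln rmax + gn \<le> ln (r (Xp xs w k0)) + g1'" by linarith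
    then have "ereal (ln rmax) + as_G r xs w n \<le> ereal (ln (r (Xp xs w k0)) + g1')" by (simp add: Gn)
    then show ?thesis using Lk by (simp add: as_stop_def)
  qed
qed

lemma meas_comp: "(\<lambda>w. w n) \<in> rand_space \<rightarrow>\<^sub>M M0"
  unfolding rand_space_def by (rule measurable_component_singleton) simp

lemma meas_u[measurable]: "(\<lambda>w. fst (w n)) \<in> borel_measurable rand_space"
proof -
  have "(\<lambda>w. fst (w n)) \<in> rand_space \<rightarrow>\<^sub>M unifP"
    using measurable_compose[OF meas_comp measurable_fst] by simp
  then show ?thesis by (simp add: measurable_cong_sets[OF refl sets_unifP])
qed

lemma meas_v[measurable]: "(\<lambda>w. snd (w n)) \<in> borel_measurable rand_space"
proof -
  have "(\<lambda>w. snd (w n)) \<in> rand_space \<rightarrow>\<^sub>M unifP"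
    using measurable_compose[OF meas_comp measurable_snd] by simp
  then show ?thesis by (simp add: measurable_cong_sets[OF refl sets_unifP])
qed

lemma abseq_meas_both:
  "(\<lambda>w. fst (abseq xs w n)) \<in> borel_measurable rand_space \<and> (\<lambda>w. snd (abseq xs w n)) \<in> borel_measurable rand_space"
proof (induction n)
  case 0 then show ?case by simp
next
  case (Suc n)
  then have [measurable]: "(\<lambda>w. fst (abseq xs w n)) \<in> borel_measurable rand_space"
     "(\<lambda>w. snd (abseq xs w n)) \<in> borel_measurable rand_space" by auto
  show ?case by (simp add: abstep_def Let_def) measurable
qed

lemma abseq_fst_meas[measurable]: "(\<lambda>w. fst (abseq xs w n)) \<in> borel_measurable rand_space"
  using abseq_meas_both by blast
lemma abseq_snd_meas[measurable]: "(\<lambda>w. snd (abseq xs w n)) \<in> borel_measurable rand_space"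
  using abseq_meas_both by blast

lemma Dw_meas[measurable]: "(\<lambda>w. Dw xs w n) \<in> borel_measurable rand_space"
  unfolding Dw_def by measurable
lemma Xp_meas[measurable]: "(\<lambda>w. Xp xs w n) \<in> borel_measurable rand_space"
  unfolding Xp_def by measurable
lemma Ew_meas[measurable]: "(\<lambda>w. Ew w n) \<in> borel_measurable rand_space"
  unfolding Ew_def by measurable

lemma hit_meas[measurable]:
  assumes [measurable]: "S \<in> sets borel"
  shows "Measurable.pred rand_space (\<lambda>w. hit xs S w m)"
  unfolding hit_def by measurable

lemma Shat_meas[measurable]:
  assumes [measurable]: "S \<in> sets borel"
  shows "(\<lambda>w. Shat xs S w m) \<in> borel_measurable rand_space"
  unfolding Shat_def by measurable

lemma S_level_borel[measurable]:
  assumes [measurable]: "r \<in> borel_measurable borel"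
  shows "S_level r rmax \<gamma> \<in> sets borel"
  unfolding S_level_def by measurable

lemma nn_FTC:
  fixes f F :: "real \<Rightarrow> real"
  assumes "a \<le> b"
  assumes deriv: "\<And>x. a \<le> x \<Longrightarrow> x \<le> b \<Longrightarrow> DERIV F x :> f x"
  assumes cont: "\<And>x. a \<le> x \<Longrightarrow> x \<le> b \<Longrightarrow> isCont f x"
  assumes nn: "\<And>x. a \<le> x \<Longrightarrow> x \<le> b \<Longrightarrow> 0 \<le> f x"
  shows "(\<integral>\<^sup>+x. ennreal (f x * indicator {a..b} x) \<partial>lborel) = ennreal (F b - F a)"
proof -
  have hb: "has_bochner_integral lborel (\<lambda>x. f x * indicator {a .. b} x) (F b - F a)"
    by (rule has_bochner_integral_FTC_Icc_real[OF assms(1-3)])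
  show ?thesis
    using hb nn
    by (subst nn_integral_eq_integral)
       (auto simp: has_bochner_integral_iff indicator_def)
qed

lemma int_unifP:
  assumes [measurable]: "f \<in> borel_measurable borel"
  shows "(\<integral>\<^sup>+x. f x \<partial>unifP) = (\<integral>\<^sup>+x. f x * indicator {0..1} x \<partial>lborel)"
  unfolding unifP_def by (subst nn_integral_uniform_measure) (auto simp: divide_ennreal_def)

lemma phi_int:
  assumes p: "0 \<le> p" "p \<le> 1"
  shows "(\<integral>\<^sup>+v. ennreal (phi p v) \<partial>unifP) \<le> ennreal (3/4)"
proof -
  have [measurable]: "(\<lambda>v. ennreal (phi p v)) \<in> borel_measurable borel"
    unfolding phi_def by measurable
  have "(\<integral>\<^sup>+v. ennreal (phi p v) \<partial>unifP) = (\<integral>\<^sup>+v. ennreal (phi p v) * indicator {0..1} v \<partial>lborel)"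
    by (rule int_unifP) measurable
  also have "\<dots> \<le> (\<integral>\<^sup>+v. ennreal ((1 - v) * indicator {0..p} v) + ennreal (v * indicator {p..1} v) \<partial>lborel)"
    by (intro nn_integral_mono) (auto simp: phi_def indicator_def ennreal_plus[symmetric] simp del: ennreal_plus)
  also have "\<dots> = (\<integral>\<^sup>+v. ennreal ((1 - v) * indicator {0..p} v) \<partial>lborel) + (\<integral>\<^sup>+v. ennreal (v * indicator {p..1} v) \<partial>lborel)"
    by (intro nn_integral_add) auto
  also have "(\<integral>\<^sup>+v. ennreal ((1 - v) * indicator {0..p} v) \<partial>lborel) = ennreal ((p - p^2/2) - (0 - 0^2/2))"
    using p by (intro nn_FTC) (auto intro!: derivative_eq_intros)
  also have "(\<integral>\<^sup>+v. ennreal (v * indicator {p..1} v) \<partial>lborel) = ennreal (1^2/2 - p^2/2)"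
    using p by (intro nn_FTC[where F="\<lambda>v. v^2/2"]) (auto intro!: derivative_eq_intros)
  also have "ennreal ((p - p^2/2) - (0 - 0^2/2)) + ennreal (1^2/2 - p^2/2) = ennreal (1/2 + p - p^2)"
    using p by (subst ennreal_plus[symmetric]) (auto simp: power2_eq_square intro!: arg_cong[where f=ennreal] mult_left_le mult_le_one mult_left_mono)
  also have "\<dots> \<le> ennreal (3/4)"
  proof (intro ennreal_leI)
    have "0 \<le> (p - 1/2)^2" by simp
    then show "1 / 2 + p - p\<^sup>2 \<le> 3 / 4" by (simp add: power2_eq_square algebra_simps)
  qed
  finally show ?thesis by simp
qed

lemma ln_nonpos01: "u \<le> 1 \<Longrightarrow> 0 \<le> u \<Longrightarrow> ln (u::real) \<le> 0"
  by (cases "u = 0") auto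

lemma E_int: "(\<integral>\<^sup>+u. ennreal (- ln u) \<partial>unifP) \<le> 1"
proof -
  define fn where "fn n u = ennreal (- ln u * indicator {1 / real (Suc n)..1} u)" for n and u :: real
  have [measurable]: "(\<lambda>u. ennreal (- ln u)) \<in> borel_measurable borel" by measurable
  have fnm[measurable]: "fn n \<in> borel_measurable lborel" for n unfolding fn_def by measurable
  have inc: "incseq fn"
  proof (intro incseq_SucI le_funI)
    fix n u
    have "1 / real (Suc (Suc n)) \<le> 1 / real (Suc n)" by (simp add: frac_le)
    then show "fn n u \<le> fn (Suc n) u"
      unfolding fn_def by (auto simp: indicator_def intro!: ennreal_leI ln_nonpos01)
  qed
  have pw: "ennreal (- ln u) * indicator {0..1} u \<le> (SUP n. fn n u)" for u :: real
  proof (cases "0 < u \<and> u \<le> 1")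
    case True
    obtain n0 where "1 / u < real n0" using reals_Archimedean2[of "1/u"] by auto
    then have hn: "1 / u < real (Suc n0)" by simp
    define n where "n = n0"
    have "1 < real (Suc n) * u" unfolding n_def using hn True by (simp add: divide_less_eq mult.commute)
    then have "1 / real (Suc n) \<le> u" by (simp add: divide_le_eq mult.commute)
    then have "ennreal (- ln u) * indicator {0..1} u = fn n u"
      using True by (simp add: fn_def indicator_def)
    also have "\<dots> \<le> (SUP n. fn n u)" by (rule SUP_upper) auto
    finally show ?thesis .
  next
    case False
    then have "ennreal (- ln u) * indicator {0..1} u = 0"
      by (cases "u = 0") (auto simp: indicator_def)
    then show ?thesis by (simp only:) simp
  qed
  have bnd: "integral\<^sup>N lborel (fn n) \<le> 1" for n
  proof -
    define e where "e = 1 / real (Suc n)"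
    have e: "0 < e" "e \<le> 1" by (auto simp: e_def)
    have "integral\<^sup>N lborel (fn n) = ennreal ((1 - 1 * ln 1) - (e - e * ln e))"
      unfolding fn_def e_def[symmetric]
      using e by (intro nn_FTC[where F="\<lambda>u. u - u * ln u"])
         (auto intro!: derivative_eq_intros ln_nonpos01 continuous_intros simp: field_simps)
    also have "\<dots> \<le> ennreal 1"
    proof (intro ennreal_leI)
      have "ln e \<le> 0" using e by (intro ln_nonpos01) auto
      then have "e * ln e \<le> 0" using e by (simp add: mult_nonneg_nonpos)
      then show "1 - 1 * ln 1 - (e - e * ln e) \<le> 1" using e by (subst ln_one) linarith
    qed
    finally show ?thesis by simp
  qed
  have "(\<integral>\<^sup>+u. ennreal (- ln u) \<partial>unifP) = (\<integral>\<^sup>+u. ennreal (- ln u) * indicator {0..1} u \<partial>lborel)"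
    by (rule int_unifP) measurable
  also have "\<dots> \<le> (\<integral>\<^sup>+u. (SUP n. fn n u) \<partial>lborel)"
    by (intro nn_integral_mono pw)
  also have "\<dots> = (SUP n. integral\<^sup>N lborel (fn n))"
    using nn_integral_monotone_convergence_SUP[OF inc fnm] by (simp add: SUP_apply[symmetric])
  also have "\<dots> \<le> 1" by (intro SUP_least bnd)
  finally show ?thesis .
qed

lemma E_small: "(\<integral>\<^sup>+u. indicator {u. - ln u < c} u \<partial>unifP) \<le> ennreal c"
proof -
  have [measurable]: "{u::real. - ln u < c} \<in> sets borel" by measurable
  have "(\<integral>\<^sup>+u. indicator {u. - ln u < c} u \<partial>unifP) = (\<integral>\<^sup>+u. indicator {u. - ln u < c} u * indicator {0..1} u \<partial>lborel)"
    by (rule int_unifP) measurable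
  also have "\<dots> \<le> ennreal c"
  proof (cases "c > 0")
    case True
    have "(\<integral>\<^sup>+u. indicator {u. - ln u < c} u * indicator {0..1} u \<partial>lborel) \<le> (\<integral>\<^sup>+u. indicator {exp (-c)..1} u \<partial>lborel)"
    proof (intro nn_integral_mono_AE)
      show "AE u in lborel. indicator {u. - ln u < c} u * indicator {0..1} u \<le> (indicator {exp (-c)..1} u :: ennreal)"
        using AE_lborel_singleton[of 0]
      proof eventually_elim
        case (elim u)
        show ?case
        proof (cases "0 < u \<and> u \<le> 1 \<and> - ln u < c")
          case True
          then have "ln (exp (-c)) \<le> ln u" by simp
          then have "exp (-c) \<le> u" using True by (subst (asm) ln_le_cancel_iff) auto
          then show ?thesis using True by (auto simp: indicator_def)
        next
          case False
          then show ?thesis using elim by (auto simp: indicator_def)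
        qed
      qed
    qed
    also have "\<dots> = ennreal (1 - exp (-c))"
      using True by simp
    also have "\<dots> \<le> ennreal c"
      using exp_ge_add_one_self[of "-c"] by (intro ennreal_leI) simp
    finally show ?thesis .
  next
    case False
    have "indicator {u. - ln u < c} u * indicator {0..1} u = (0::ennreal)" for u :: real
      using False ln_nonpos01[of u] by (auto simp: indicator_def)
    then have "(\<lambda>u. indicator {u. - ln u < c} u * indicator {0..1} u) = (\<lambda>u::real. 0::ennreal)" by auto
    then show ?thesis by (simp del: nn_integral_indicator)
  qed
  finally show ?thesis .
qed

lemma abseq_upd_ge: "n \<le> k \<Longrightarrow> abseq xs (w(k:=y)) n = abseq xs w n"
  by (induction n) auto

lemma abseq_upd_u: "abseq xs (w(k:=(u, snd (w k)))) n = abseq xs w n"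
  by (induction n) auto

lemma Dw_upd_ge: "n \<le> k \<Longrightarrow> Dw xs (w(k:=y)) n = Dw xs w n"
  by (simp add: Dw_def abseq_upd_ge)
lemma Dw_upd_u: "Dw xs (w(k:=(u, snd (w k)))) n = Dw xs w n"
  by (simp add: Dw_def abseq_upd_u)
lemma Xp_upd_ge: "n < k \<Longrightarrow> Xp xs (w(k:=y)) n = Xp xs w n"
  by (simp add: Xp_def Dw_upd_ge abseq_upd_ge)
lemma Xp_upd_u: "Xp xs (w(k:=(u, snd (w k)))) n = Xp xs w n"
  by (simp add: Xp_def Dw_upd_u abseq_upd_u)
lemma hit_upd_ge: "m \<le> k \<Longrightarrow> hit xs S (w(k:=y)) m = hit xs S w m"
  unfolding hit_def by (metis Xp_upd_ge less_le_trans)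
lemma hit_upd_u: "hit xs S (w(k:=(u, snd (w k)))) m = hit xs S w m"
  by (simp add: hit_def Xp_upd_u)
lemma Ew_upd: "j \<noteq> k \<Longrightarrow> Ew (w(k:=y)) j = Ew w j"
  by (simp add: Ew_def)
lemma Shat_upd_ge: "m \<le> k \<Longrightarrow> Shat xs S (w(k:=y)) m = Shat xs S w m"
  unfolding Shat_def by (intro sum.cong) (auto simp: hit_upd_ge Dw_upd_ge Ew_upd)

lemma int_M0_snd:
  assumes [measurable]: "g \<in> borel_measurable borel"
  shows "(\<integral>\<^sup>+y. g (snd y) \<partial>M0) = (\<integral>\<^sup>+v. g v \<partial>unifP)"
proof -
  interpret U: prob_space unifP by (rule prob_unifP)
  have m: "(\<lambda>y. g (snd y)) \<in> borel_measurable M0" by measurable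
  have "(\<integral>\<^sup>+y. g (snd y) \<partial>M0) = (\<integral>\<^sup>+u. (\<integral>\<^sup>+v. g v \<partial>unifP) \<partial>unifP)"
    using U.nn_integral_fst[OF m] by simp
  also have "\<dots> = (\<integral>\<^sup>+v. g v \<partial>unifP)"
    using U.emeasure_space_1 by simp
  finally show ?thesis .
qed

lemma contract:
  assumes xs01: "0 \<le> xs" "xs \<le> 1"
    and Fm[measurable]: "F \<in> borel_measurable rand_space"
    and Floc: "\<And>w k y. j \<le> k \<Longrightarrow> F (w(k:=y)) = F w"
    and jm: "j \<le> m"
  shows "(\<integral>\<^sup>+w. F w * ennreal (Dw xs w m) \<partial>rand_space) \<le> ennreal (3/4) ^ (m - j) * (\<integral>\<^sup>+w. F w * ennreal (Dw xs w j) \<partial>rand_space)"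
  using jm
proof (induction m rule: dec_induct)
  case base
  then show ?case by simp
next
  case (step m)
  have phim[measurable]: "(\<lambda>v. ennreal (phi p v)) \<in> borel_measurable borel" for p
    unfolding phi_def by measurable
  have inner: "(\<integral>\<^sup>+y. F (w(m:=y)) * ennreal (Dw xs (w(m:=y)) (Suc m)) \<partial>M0) \<le> ennreal (3/4) * (F w * ennreal (Dw xs w m))" for w
  proof -
    define p where "p = (xs - fst (abseq xs w m)) / Dw xs w m"
    have p01: "0 \<le> p" "p \<le> 1"
      using ab_inv[OF xs01, of w m] Dw_nonneg[OF xs01, of w m]
      by (auto simp: p_def Dw_def divide_le_eq_1)
    have "(\<integral>\<^sup>+y. F (w(m:=y)) * ennreal (Dw xs (w(m:=y)) (Suc m)) \<partial>M0) \<le> (\<integral>\<^sup>+y. (F w * ennreal (Dw xs w m)) * ennreal (phi p (snd y)) \<partial>M0)"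
    proof (intro nn_integral_mono)
      fix y
      have "Dw xs (w(m:=y)) (Suc m) \<le> Dw xs w m * phi p (snd y)"
        using Dw_Suc_le[OF xs01, of "w(m:=y)" m] by (simp add: abseq_upd_ge Dw_upd_ge p_def)
      moreover have "0 \<le> Dw xs w m" by (rule Dw_nonneg[OF xs01])
      ultimately have "ennreal (Dw xs (w(m:=y)) (Suc m)) \<le> ennreal (Dw xs w m) * ennreal (phi p (snd y))"
        by (simp add: ennreal_mult'[symmetric] ennreal_leI)
      then show "F (w(m:=y)) * ennreal (Dw xs (w(m:=y)) (Suc m)) \<le> (F w * ennreal (Dw xs w m)) * ennreal (phi p (snd y))"
        using Floc[of m w y] step.hyps by (simp add: mult.assoc mult_left_mono)
    qed
    also have "\<dots> = (F w * ennreal (Dw xs w m)) * (\<integral>\<^sup>+y. ennreal (phi p (snd y)) \<partial>M0)"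
      by (rule nn_integral_cmult) measurable
    also have "(\<integral>\<^sup>+y. ennreal (phi p (snd y)) \<partial>M0) = (\<integral>\<^sup>+v. ennreal (phi p v) \<partial>unifP)"
      by (rule int_M0_snd) measurable
    also have "(F w * ennreal (Dw xs w m)) * \<dots> \<le> (F w * ennreal (Dw xs w m)) * ennreal (3/4)"
      by (intro mult_left_mono phi_int p01) simp
    finally show ?thesis by (simp only: ac_simps)
  qed
  have "(\<integral>\<^sup>+w. F w * ennreal (Dw xs w (Suc m)) \<partial>rand_space)
      = (\<integral>\<^sup>+w. (\<integral>\<^sup>+y. F (w(m:=y)) * ennreal (Dw xs (w(m:=y)) (Suc m)) \<partial>M0) \<partial>rand_space)"
    by (rule coord_int) measurable
  also have "\<dots> \<le> (\<integral>\<^sup>+w. ennreal (3/4) * (F w * ennreal (Dw xs w m)) \<partial>rand_space)"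
    by (intro nn_integral_mono inner)
  also have "\<dots> = ennreal (3/4) * (\<integral>\<^sup>+w. F w * ennreal (Dw xs w m) \<partial>rand_space)"
    by (rule nn_integral_cmult) measurable
  also have "\<dots> \<le> ennreal (3/4) * (ennreal (3/4) ^ (m - j) * (\<integral>\<^sup>+w. F w * ennreal (Dw xs w j) \<partial>rand_space))"
    by (intro mult_left_mono step.IH) simp
  also have "\<dots> = ennreal (3/4) ^ (Suc m - j) * (\<integral>\<^sup>+w. F w * ennreal (Dw xs w j) \<partial>rand_space)"
    using step.hyps by (simp add: Suc_diff_le mult.assoc)
  finally show ?case .
qed

lemma E_factor:
  assumes Gm[measurable]: "G \<in> borel_measurable rand_space"
    and Gloc: "\<And>w u. G (w(j:=(u, snd (w j)))) = G w"
  shows "(\<integral>\<^sup>+w. G w * ennreal (Ew w j) \<partial>rand_space) \<le> (\<integral>\<^sup>+w. G w \<partial>rand_space)"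
proof -
  have "(\<integral>\<^sup>+w. G w * ennreal (Ew w j) \<partial>rand_space)
     = (\<integral>\<^sup>+w. (\<integral>\<^sup>+u. G (w(j:=(u, snd (w j)))) * ennreal (Ew (w(j:=(u, snd (w j)))) j) \<partial>unifP) \<partial>rand_space)"
    by (rule u_int) measurable
  also have "\<dots> = (\<integral>\<^sup>+w. (\<integral>\<^sup>+u. G w * ennreal (- ln u) \<partial>unifP) \<partial>rand_space)"
    by (simp add: Gloc Ew_def)
  also have "\<dots> = (\<integral>\<^sup>+w. G w * (\<integral>\<^sup>+u. ennreal (- ln u) \<partial>unifP) \<partial>rand_space)"
    by (intro nn_integral_cong nn_integral_cmult) measurable
  also have "\<dots> \<le> (\<integral>\<^sup>+w. G w * 1 \<partial>rand_space)"
    by (intro nn_integral_mono mult_left_mono E_int) simp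
  finally show ?thesis by simp
qed

lemma E_small_int:
  assumes cm[measurable]: "c \<in> borel_measurable rand_space"
    and cloc: "\<And>w u. c (w(i:=(u, snd (w i)))) = c w"
  shows "(\<integral>\<^sup>+w. indicator {w. Ew w i < c w} w \<partial>rand_space) \<le> (\<integral>\<^sup>+w. ennreal (c w) \<partial>rand_space)"
proof -
  have "(\<integral>\<^sup>+w. indicator {w. Ew w i < c w} w \<partial>rand_space)
     = (\<integral>\<^sup>+w. (\<integral>\<^sup>+u. indicator {w. Ew w i < c w} (w(i:=(u, snd (w i)))) \<partial>unifP) \<partial>rand_space)"
    by (rule u_int) measurable
  also have "\<dots> = (\<integral>\<^sup>+w. (\<integral>\<^sup>+u. indicator {u. - ln u < c w} u \<partial>unifP) \<partial>rand_space)"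
    by (intro nn_integral_cong) (simp add: cloc Ew_def indicator_def)
  also have "\<dots> \<le> (\<integral>\<^sup>+w. ennreal (c w) \<partial>rand_space)"
    by (intro nn_integral_mono E_small)
  finally show ?thesis .
qed

definition "fterm xs S \<gamma> K n w =
   indicator {w. \<not> hit xs S w (n - K - 1)} w
 + indicator {w. Ew w (n - 1) < Dw xs w (n - 1) * Shat xs S w (n - K - 1) / \<gamma>} w"

lemma T_path:
  assumes xs01: "0 \<le> xs" "xs \<le> 1"
    and U: "\<And>n. 0 < fst (w n) \<and> fst (w n) < 1"
    and r_xs: "r xs = rmax" and rpos: "rmax > 0" and g: "0 < \<gamma>" "\<gamma> \<le> 1"
  shows "as_T r xs rmax w \<le> (\<Sum>n. fterm xs (S_level r rmax \<gamma>) \<gamma> K n w :: ennreal)"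
proof -
  let ?S = "S_level r rmax \<gamma>"
  let ?f = "\<lambda>n. fterm xs ?S \<gamma> K n w :: ennreal"
  have key: "1 \<le> ?f n" if ns: "\<And>m. 1 \<le> m \<Longrightarrow> m \<le> n \<Longrightarrow> \<not> as_stop r xs rmax w m" for n
  proof (cases "hit xs ?S w (n - K - 1)")
    case False
    then show ?thesis by (simp add: fterm_def)
  next
    case True
    then have m1: "n - K - 1 \<ge> 1" by (cases "n - K - 1") (auto simp: hit_def)
    then have mn: "n - K - 1 < n" by simp
    have "\<not> Ew w (n - 1) \<ge> Dw xs w (n - 1) * Shat xs ?S w (n - K - 1) / \<gamma>"
    proof
      assume "Ew w (n - 1) \<ge> Dw xs w (n - 1) * Shat xs ?S w (n - K - 1) / \<gamma>"
      then have "as_stop r xs rmax w n"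
        using stop_lemma[OF xs01 U r_xs rpos g True mn] by simp
      moreover have "1 \<le> n" using mn m1 by simp
      ultimately show False using ns by auto
    qed
    then show ?thesis by (simp add: fterm_def not_le)
  qed
  have sumN: "of_nat N \<le> (\<Sum>n. ?f n)" if "\<And>n. n < N \<Longrightarrow> 1 \<le> ?f n" for N
  proof -
    have "of_nat N = (\<Sum>n<N. 1 :: ennreal)" by simp
    also have "\<dots> \<le> (\<Sum>n<N. ?f n)" by (intro sum_mono that) simp
    also have "\<dots> \<le> (\<Sum>n. ?f n)" by (intro sum_le_suminf) auto
    finally show ?thesis .
  qed
  show ?thesis
  proof (cases "\<exists>n\<ge>1. as_stop r xs rmax w n")
    case True
    define N where "N = (LEAST n. n \<ge> 1 \<and> as_stop r xs rmax w n)"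
    have "as_T r xs rmax w = of_nat N" using True by (simp add: as_T_def N_def)
    moreover have "of_nat N \<le> (\<Sum>n. ?f n)"
    proof (rule sumN)
      fix n assume "n < N"
      show "1 \<le> ?f n"
      proof (rule key)
        fix m assume "1 \<le> m" "m \<le> n"
        then have "m < N" using \<open>n < N\<close> by simp
        then show "\<not> as_stop r xs rmax w m" using \<open>1 \<le> m\<close> not_less_Least[of m "\<lambda>n. n \<ge> 1 \<and> as_stop r xs rmax w n"]
          unfolding N_def by blast
      qed
    qed
    ultimately show ?thesis by simp
  next
    case False
    then have "\<And>N. of_nat N \<le> (\<Sum>n. ?f n)"
      by (intro sumN key) auto
    then have "(SUP N. of_nat N) \<le> (\<Sum>n. ?f n)" by (intro SUP_least) auto
    then have "(\<Sum>n. ?f n) = \<infinity>" by (simp add: ennreal_SUP_of_nat_eq_top top_unique)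
    then show ?thesis by simp
  qed
qed

definition "Pj xs S j = (\<integral>\<^sup>+w. indicator {w. \<not> hit xs S w j} w \<partial>rand_space)"

lemma ennreal_add_le: "ennreal (a + b) \<le> ennreal a + ennreal b"
proof (cases "a \<ge> 0 \<and> b \<ge> 0")
  case True then show ?thesis by (simp add: ennreal_plus)
next
  case False
  then have "a + b \<le> a \<or> a + b \<le> b" by auto
  then show ?thesis
  proof
    assume "a + b \<le> a" then have "ennreal (a + b) \<le> ennreal a" by (rule ennreal_leI)
    then show ?thesis by (simp add: add_increasing2)
  next
    assume "a + b \<le> b" then have "ennreal (a + b) \<le> ennreal b" by (rule ennreal_leI)
    then show ?thesis by (simp add: add_increasing)
  qed
qed

lemma ennreal_sum_le: "ennreal (\<Sum>j\<in>A. f j) \<le> (\<Sum>j\<in>A. ennreal (f j))"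
proof (induction A rule: infinite_finite_induct)
  case (insert x F)
  have "ennreal (\<Sum>j\<in>insert x F. f j) = ennreal (f x + (\<Sum>j\<in>F. f j))" using insert by simp
  also have "\<dots> \<le> ennreal (f x) + ennreal (\<Sum>j\<in>F. f j)"
    by (rule ennreal_add_le)
  also have "\<dots> \<le> ennreal (f x) + (\<Sum>j\<in>F. ennreal (f j))" using insert by (intro add_left_mono) auto
  finally show ?case using insert by simp
qed auto

context
  fixes r :: "real \<Rightarrow> real" and xs rmax \<gamma> :: real
  assumes xs01: "0 \<le> xs" "xs \<le> 1"
    and r_meas[measurable]: "r \<in> borel_measurable borel"
    and r_inc: "mono_on {0..xs} r" and r_dec: "antimono_on {xs..1} r"
    and g: "0 < \<gamma>" "\<gamma> \<le> 1"
begin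

lemma P_bound_j:
  assumes "j \<le> n"
  shows "(\<integral>\<^sup>+w. indicator {w. \<not> hit xs (S_level r rmax \<gamma>) w j} w * ennreal (Dw xs w n / Dw xs w j) \<partial>rand_space)
     \<le> ennreal (3/4) ^ (n - j) * Pj xs (S_level r rmax \<gamma>) j"
proof -
  let ?S = "S_level r rmax \<gamma>"
  define F where "F w = indicator {w. \<not> hit xs ?S w j} w * ennreal (1 / Dw xs w j)" for w
  have Fm[measurable]: "F \<in> borel_measurable rand_space" unfolding F_def by measurable
  have Floc: "F (w(k:=y)) = F w" if "j \<le> k" for w k y
    using that by (simp add: F_def hit_upd_ge Dw_upd_ge indicator_def)
  have eq: "indicator {w. \<not> hit xs ?S w j} w * ennreal (Dw xs w n / Dw xs w j) = F w * ennreal (Dw xs w n)" for w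
  proof -
    have "ennreal (Dw xs w n / Dw xs w j) = ennreal (Dw xs w n) * ennreal (1 / Dw xs w j)"
      using Dw_nonneg[OF xs01, of w j] Dw_nonneg[OF xs01, of w n]
      by (subst ennreal_mult[symmetric]) auto
    then show ?thesis by (simp add: F_def mult_ac)
  qed
  have "(\<integral>\<^sup>+w. indicator {w. \<not> hit xs ?S w j} w * ennreal (Dw xs w n / Dw xs w j) \<partial>rand_space)
      = (\<integral>\<^sup>+w. F w * ennreal (Dw xs w n) \<partial>rand_space)" by (simp add: eq)
  also have "\<dots> \<le> ennreal (3/4) ^ (n - j) * (\<integral>\<^sup>+w. F w * ennreal (Dw xs w j) \<partial>rand_space)"
    by (rule contract[OF xs01 Fm Floc assms])
  also have "(\<integral>\<^sup>+w. F w * ennreal (Dw xs w j) \<partial>rand_space) \<le> Pj xs ?S j"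
    unfolding Pj_def
  proof (intro nn_integral_mono)
    fix w
    have "ennreal (1 / Dw xs w j) * ennreal (Dw xs w j) \<le> 1"
      using Dw_nonneg[OF xs01, of w j]
      by (cases "Dw xs w j = 0") (simp_all add: ennreal_mult[symmetric])
    then show "F w * ennreal (Dw xs w j) \<le> indicator {w. \<not> hit xs ?S w j} w"
      by (simp add: F_def indicator_def)
  qed
  then have "ennreal (3/4) ^ (n - j) * (\<integral>\<^sup>+w. F w * ennreal (Dw xs w j) \<partial>rand_space) \<le> ennreal (3/4) ^ (n - j) * Pj xs ?S j"
    by (intro mult_left_mono) auto
  finally show ?thesis .
qed

lemma Pj_le1: "Pj xs S j \<le> 1"
proof -
  interpret R: prob_space rand_space by (rule prob_rand)
  have "Pj xs S j \<le> (\<integral>\<^sup>+w. 1 \<partial>rand_space)" unfolding Pj_def by (intro nn_integral_mono) (simp add: indicator_def)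
  also have "\<dots> = 1" using R.emeasure_space_1 by simp
  finally show ?thesis .
qed

lemma Pj_w:
  assumes ww: "w_width r rmax \<gamma> > 0"
  shows "Pj xs (S_level r rmax \<gamma>) j \<le> ennreal (1 / w_width r rmax \<gamma>) * ennreal (3/4) ^ j"
proof -
  let ?S = "S_level r rmax \<gamma>" and ?W = "w_width r rmax \<gamma>"
  interpret R: prob_space rand_space by (rule prob_rand)
  have "Pj xs ?S j \<le> (\<integral>\<^sup>+w. ennreal (1 / ?W) * (1 * ennreal (Dw xs w j)) \<partial>rand_space)"
    unfolding Pj_def
  proof (intro nn_integral_mono)
    fix w
    show "indicator {w. \<not> hit xs ?S w j} w \<le> ennreal (1 / ?W) * (1 * ennreal (Dw xs w j))"
    proof (cases "hit xs ?S w j")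
      case False
      then have "?W \<le> Dw xs w j" using w_le_D[OF xs01 r_inc r_dec] by blast
      then have "1 \<le> 1 / ?W * Dw xs w j" using ww by (simp add: field_simps)
      then show ?thesis using False ww by (simp add: ennreal_mult[symmetric] ennreal_1[symmetric] del: ennreal_1)
    qed simp
  qed
  also have "\<dots> = ennreal (1 / ?W) * (\<integral>\<^sup>+w. 1 * ennreal (Dw xs w j) \<partial>rand_space)"
    by (rule nn_integral_cmult) measurable
  also have "(\<integral>\<^sup>+w. 1 * ennreal (Dw xs w j) \<partial>rand_space) \<le> ennreal (3/4) ^ (j - 0) * (\<integral>\<^sup>+w. 1 * ennreal (Dw xs w 0) \<partial>rand_space)"
    by (rule contract[OF xs01]) auto
  also have "\<dots> = ennreal (3/4) ^ j" using R.emeasure_space_1 by simp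
  finally show ?thesis by (simp add: mult_left_mono)
qed

lemma T2_bound:
  "(\<integral>\<^sup>+w. indicator {w. Ew w (n - 1) < Dw xs w (n - 1) * Shat xs (S_level r rmax \<gamma>) w (n - K - 1) / \<gamma>} w \<partial>rand_space)
    \<le> ennreal (1 / \<gamma>) * (\<Sum>j<n - K - 1. ennreal (3/4) ^ (n - 1 - j) * Pj xs (S_level r rmax \<gamma>) j)"
proof -
  let ?S = "S_level r rmax \<gamma>"
  define m where "m = n - K - 1"
  define i where "i = n - 1"
  have mi: "m \<le> i" by (simp add: m_def i_def)
  define c where "c w = Dw xs w i * Shat xs ?S w m / \<gamma>" for w
  have cm[measurable]: "c \<in> borel_measurable rand_space" unfolding c_def by measurable
  have cloc: "c (w(i:=(u, snd (w i)))) = c w" for w u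
    using mi by (simp add: c_def Dw_upd_u Shat_upd_ge)
  define t where "t j w = Dw xs w i * (if hit xs ?S w j then 0 else Ew w j / Dw xs w j) / \<gamma>" for j w
  have tm[measurable]: "(\<lambda>w. ennreal (t j w)) \<in> borel_measurable rand_space" for j unfolding t_def by measurable
  have "(\<integral>\<^sup>+w. indicator {w. Ew w i < c w} w \<partial>rand_space) \<le> (\<integral>\<^sup>+w. ennreal (c w) \<partial>rand_space)"
    by (rule E_small_int[OF cm cloc])
  also have "\<dots> \<le> (\<integral>\<^sup>+w. (\<Sum>j<m. ennreal (t j w)) \<partial>rand_space)"
  proof (intro nn_integral_mono)
    fix w
    have "c w = (\<Sum>j<m. t j w)"
      by (simp add: c_def t_def Shat_def sum_distrib_left sum_divide_distrib)
    then show "ennreal (c w) \<le> (\<Sum>j<m. ennreal (t j w))" using ennreal_sum_le by metis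
  qed
  also have "\<dots> = (\<Sum>j<m. (\<integral>\<^sup>+w. ennreal (t j w) \<partial>rand_space))"
    by (rule nn_integral_sum) measurable
  also have "\<dots> \<le> (\<Sum>j<m. ennreal (1 / \<gamma>) * (ennreal (3/4) ^ (i - j) * Pj xs ?S j))"
  proof (intro sum_mono)
    fix j assume "j \<in> {..<m}"
    then have ji: "j \<le> i" using mi by simp
    define G where "G w = indicator {w. \<not> hit xs ?S w j} w * ennreal (Dw xs w i / Dw xs w j / \<gamma>)" for w
    have Gm[measurable]: "G \<in> borel_measurable rand_space" unfolding G_def by measurable
    have Gloc: "G (w(j:=(u, snd (w j)))) = G w" for w u
      by (simp add: G_def hit_upd_u Dw_upd_u indicator_def)
    have teq: "ennreal (t j w) = G w * ennreal (Ew w j)" for w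
    proof (cases "hit xs ?S w j")
      case True then show ?thesis by (simp add: t_def G_def)
    next
      case False
      have "t j w = (Dw xs w i / Dw xs w j / \<gamma>) * Ew w j" using False by (simp add: t_def)
      moreover have "0 \<le> Dw xs w i / Dw xs w j / \<gamma>" using Dw_nonneg[OF xs01] g by simp
      ultimately have "ennreal (t j w) = ennreal (Dw xs w i / Dw xs w j / \<gamma>) * ennreal (Ew w j)"
        by (simp only: ennreal_mult')
      then show ?thesis using False by (simp add: G_def)
    qed
    have "(\<integral>\<^sup>+w. ennreal (t j w) \<partial>rand_space) = (\<integral>\<^sup>+w. G w * ennreal (Ew w j) \<partial>rand_space)"
      by (simp add: teq)
    also have "\<dots> \<le> (\<integral>\<^sup>+w. G w \<partial>rand_space)" by (rule E_factor[OF Gm Gloc])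
    also have "\<dots> = (\<integral>\<^sup>+w. ennreal (1 / \<gamma>) * (indicator {w. \<not> hit xs ?S w j} w * ennreal (Dw xs w i / Dw xs w j)) \<partial>rand_space)"
    proof (intro nn_integral_cong)
      fix w
      have "ennreal (Dw xs w i / Dw xs w j / \<gamma>) = ennreal (1 / \<gamma>) * ennreal (Dw xs w i / Dw xs w j)"
        using Dw_nonneg[OF xs01] g by (subst ennreal_mult[symmetric]) auto
      then show "G w = ennreal (1 / \<gamma>) * (indicator {w. \<not> hit xs ?S w j} w * ennreal (Dw xs w i / Dw xs w j))"
        by (simp add: G_def mult_ac)
    qed
    also have "\<dots> = ennreal (1 / \<gamma>) * (\<integral>\<^sup>+w. indicator {w. \<not> hit xs ?S w j} w * ennreal (Dw xs w i / Dw xs w j) \<partial>rand_space)"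
      by (rule nn_integral_cmult) measurable
    also have "\<dots> \<le> ennreal (1 / \<gamma>) * (ennreal (3/4) ^ (i - j) * Pj xs ?S j)"
      by (intro mult_left_mono P_bound_j ji) simp
    finally show "(\<integral>\<^sup>+w. ennreal (t j w) \<partial>rand_space) \<le> ennreal (1 / \<gamma>) * (ennreal (3/4) ^ (i - j) * Pj xs ?S j)" .
  qed
  also have "\<dots> = ennreal (1 / \<gamma>) * (\<Sum>j<m. ennreal (3/4) ^ (i - j) * Pj xs ?S j)"
    by (simp add: sum_distrib_left)
  finally show ?thesis by (simp add: m_def i_def c_def)
qed

end

lemma suminf_swap_ennreal: "(\<Sum>n. \<Sum>j. f n j) = (\<Sum>j. \<Sum>n. f n j :: ennreal)"
proof -
  have "(\<Sum>n. \<Sum>j. f n j) = (\<integral>\<^sup>+n. \<integral>\<^sup>+j. f n j \<partial>count_space UNIV \<partial>count_space UNIV)"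
    by (simp add: nn_integral_count_space_nat)
  also have "\<dots> = (\<integral>\<^sup>+p. f (fst p) (snd p) \<partial>count_space UNIV)"
    using nn_integral_fst_count_space[of "\<lambda>p. f (fst p) (snd p)"] by simp
  also have "\<dots> = (\<integral>\<^sup>+p. f (snd (prod.swap p)) (fst (prod.swap p)) \<partial>count_space UNIV)"
    by simp
  also have "\<dots> = (\<integral>\<^sup>+p. f (snd p) (fst p) \<partial>count_space UNIV)"
    by (rule nn_integral_bij_count_space[where g=prod.swap]) (auto simp: bij_betw_def)
  also have "\<dots> = (\<integral>\<^sup>+j. \<integral>\<^sup>+n. f n j \<partial>count_space UNIV \<partial>count_space UNIV)"
    using nn_integral_fst_count_space[of "\<lambda>p. f (snd p) (fst p)"] by simp
  also have "\<dots> = (\<Sum>j. \<Sum>n. f n j)"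
    by (simp add: nn_integral_count_space_nat)
  finally show ?thesis .
qed

lemma geom_ennreal: "(\<Sum>i. ennreal (3/4) ^ i) = 4"
proof -
  have "(\<Sum>i. ennreal (3/4) ^ i) = (\<Sum>i. ennreal ((3/4) ^ i))" by (simp add: ennreal_power)
  also have "\<dots> = ennreal (\<Sum>i. (3/4::real) ^ i)"
    by (rule suminf_ennreal2) (auto intro!: summable_geometric)
  also have "(\<Sum>i. (3/4::real) ^ i) = 4" by (subst suminf_geometric) auto
  finally show ?thesis by simp
qed

lemma offset_ennreal: "(\<Sum>n. g n) = (\<Sum>j. g (j + i)) + (\<Sum>n<i. g n :: ennreal)"
  by (rule suminf_offset) auto

lemma inner_geom:
  "(\<Sum>n. (if j < n - K - 1 then ennreal (3/4) ^ (n - 1 - j) else 0)) = ennreal (3/4) ^ (K + 1) * 4"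
proof -
  let ?g = "\<lambda>n. (if j < n - K - 1 then ennreal (3/4) ^ (n - 1 - j) else 0)"
  have "(\<Sum>n. ?g n) = (\<Sum>i. ?g (i + (j + K + 2))) + (\<Sum>n<j + K + 2. ?g n)"
    by (rule offset_ennreal)
  also have "(\<Sum>n<j + K + 2. ?g n) = 0" by (intro sum.neutral) auto
  also have "(\<Sum>i. ?g (i + (j + K + 2))) = (\<Sum>i. ennreal (3/4) ^ (K + 1) * ennreal (3/4) ^ i)"
    by (intro suminf_cong) (auto simp: power_add[symmetric] algebra_simps)
  also have "\<dots> = ennreal (3/4) ^ (K + 1) * 4" by (simp add: geom_ennreal)
  finally show ?thesis by simp
qed

lemma double_sum:
  "(\<Sum>n. \<Sum>j<n - K - 1. ennreal (3/4) ^ (n - 1 - j) * P j) = ennreal (3/4) ^ (K + 1) * 4 * (\<Sum>j. P j)"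
proof -
  have "(\<Sum>n. \<Sum>j<n - K - 1. ennreal (3/4) ^ (n - 1 - j) * P j)
      = (\<Sum>n. \<Sum>j. (if j < n - K - 1 then ennreal (3/4) ^ (n - 1 - j) else 0) * P j)"
  proof (intro suminf_cong)
    fix n
    show "(\<Sum>j<n - K - 1. ennreal (3/4) ^ (n - 1 - j) * P j) = (\<Sum>j. (if j < n - K - 1 then ennreal (3/4) ^ (n - 1 - j) else 0) * P j)"
      by (subst suminf_finite[where N="{..<n - K - 1}"]) auto
  qed
  also have "\<dots> = (\<Sum>j. \<Sum>n. (if j < n - K - 1 then ennreal (3/4) ^ (n - 1 - j) else 0) * P j)"
    by (rule suminf_swap_ennreal)
  also have "\<dots> = (\<Sum>j. ennreal (3/4) ^ (K + 1) * 4 * P j)"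
    by (simp only: ennreal_suminf_multc inner_geom)
  also have "\<dots> = ennreal (3/4) ^ (K + 1) * 4 * (\<Sum>j. P j)" by simp
  finally show ?thesis .
qed

lemma first_sum:
  assumes "P 0 = 1"
  shows "(\<Sum>n. P (n - K - 1)) = of_nat (K + 1) + (\<Sum>j. P j :: ennreal)"
proof -
  have "(\<Sum>n. P (n - K - 1)) = (\<Sum>j. P (j + (K + 1) - K - 1)) + (\<Sum>n<K + 1. P (n - K - 1))"
    by (rule offset_ennreal)
  also have "(\<Sum>n<K + 1. P (n - K - 1)) = (\<Sum>n<K + 1. 1)"
    using assms by (intro sum.cong) auto
  finally show ?thesis by (simp add: add.commute)
qed

lemma AE_U: "AE w in rand_space. \<forall>n. 0 < fst (w n) \<and> fst (w n) < 1"
proof -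
  interpret U: prob_space unifP by (rule prob_unifP)
  have "AE u in unifP. 0 < u \<and> u < 1"
    unfolding unifP_def
  proof (rule AE_uniform_measureI)
    show "{0..1::real} \<in> sets lborel" by simp
    show "AE x in lborel. x \<in> {0..1::real} \<longrightarrow> 0 < x \<and> x < 1"
      using AE_lborel_singleton[of 0] AE_lborel_singleton[of 1] by eventually_elim auto
  qed
  then have "AE u in distr M0 unifP fst. 0 < u \<and> u < 1"
    unfolding U.distr_pair_fst[of unifP] .
  then have "AE y in M0. 0 < fst y \<and> fst y < 1"
    by (rule AE_distrD[OF measurable_fst])
  then have "AE w in rand_space. 0 < fst (w n) \<and> fst (w n) < 1" for n
    unfolding rand_space_def
    using AE_PiM_component[where M="\<lambda>_. M0" and I=UNIV and i=n and P="\<lambda>y. 0 < fst y \<and> fst y < 1", OF prob_M0]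
    by simp
  then show ?thesis by (simp add: AE_all_countable)
qed

context
  fixes r :: "real \<Rightarrow> real" and xs rmax \<gamma> :: real
  assumes xs01: "0 \<le> xs" "xs \<le> 1"
    and r_meas[measurable]: "r \<in> borel_measurable borel"
    and r_inc: "mono_on {0..xs} r" and r_dec: "antimono_on {xs..1} r"
    and g: "0 < \<gamma>" "\<gamma> \<le> 1"
    and r_xs: "r xs = rmax" and rpos: "rmax > 0"
begin

lemma Pj0: "Pj xs S 0 = 1"
proof -
  interpret R: prob_space rand_space by (rule prob_rand)
  show ?thesis using R.emeasure_space_1 by (simp add: Pj_def hit_def)
qed

lemma main_int_bound:
  "(\<integral>\<^sup>+w. as_T r xs rmax w \<partial>rand_space)
    \<le> of_nat (K + 1) + (\<Sum>j. Pj xs (S_level r rmax \<gamma>) j)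
       + ennreal (1 / \<gamma>) * (ennreal (3/4) ^ (K + 1) * 4 * (\<Sum>j. Pj xs (S_level r rmax \<gamma>) j))"
proof -
  let ?S = "S_level r rmax \<gamma>"
  let ?P = "Pj xs ?S"
  have Sb[measurable]: "?S \<in> sets borel" by measurable
  have fm1: "(\<lambda>w. indicator {w. \<not> hit xs ?S w (n - K - 1)} w :: ennreal) \<in> borel_measurable rand_space" for n
    by measurable
  have fm2: "(\<lambda>w. indicator {w. Ew w (n - 1) < Dw xs w (n - 1) * Shat xs ?S w (n - K - 1) / \<gamma>} w :: ennreal) \<in> borel_measurable rand_space" for n
    by measurable
  have fm[measurable]: "(fterm xs ?S \<gamma> K n :: _ \<Rightarrow> ennreal) \<in> borel_measurable rand_space" for n
    unfolding fterm_def by (intro borel_measurable_add fm1 fm2)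
  have "(\<integral>\<^sup>+w. as_T r xs rmax w \<partial>rand_space) \<le> (\<integral>\<^sup>+w. (\<Sum>n. fterm xs ?S \<gamma> K n w) \<partial>rand_space)"
    using AE_U
  proof (intro nn_integral_mono_AE, eventually_elim)
    case (elim w)
    then show ?case using T_path[where w=w and K=K and r=r and xs=xs and rmax=rmax and \<gamma>=\<gamma>, OF xs01 _ r_xs rpos g] by blast
  qed
  also have "\<dots> = (\<Sum>n. (\<integral>\<^sup>+w. fterm xs ?S \<gamma> K n w \<partial>rand_space))"
    by (rule nn_integral_suminf) measurable
  also have "\<dots> \<le> (\<Sum>n. ?P (n - K - 1) + ennreal (1 / \<gamma>) * (\<Sum>j<n - K - 1. ennreal (3/4) ^ (n - 1 - j) * ?P j))"
  proof (intro suminf_le allI)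
    fix n
    have "(\<integral>\<^sup>+w. fterm xs ?S \<gamma> K n w \<partial>rand_space) = ?P (n - K - 1) +
       (\<integral>\<^sup>+w. indicator {w. Ew w (n - 1) < Dw xs w (n - 1) * Shat xs ?S w (n - K - 1) / \<gamma>} w \<partial>rand_space)"
      unfolding fterm_def Pj_def by (rule nn_integral_add) measurable
    also have "\<dots> \<le> ?P (n - K - 1) + ennreal (1 / \<gamma>) * (\<Sum>j<n - K - 1. ennreal (3/4) ^ (n - 1 - j) * ?P j)"
      by (intro add_left_mono T2_bound[OF xs01 r_meas r_inc r_dec g])
    finally show "(\<integral>\<^sup>+w. fterm xs ?S \<gamma> K n w \<partial>rand_space) \<le> ?P (n - K - 1) + ennreal (1 / \<gamma>) * (\<Sum>j<n - K - 1. ennreal (3/4) ^ (n - 1 - j) * ?P j)" .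
  qed auto
  also have "\<dots> = (\<Sum>n. ?P (n - K - 1)) + ennreal (1 / \<gamma>) * (\<Sum>n. \<Sum>j<n - K - 1. ennreal (3/4) ^ (n - 1 - j) * ?P j)"
    by (subst suminf_add[symmetric]) auto
  also have "\<dots> = of_nat (K + 1) + (\<Sum>j. ?P j) + ennreal (1 / \<gamma>) * (ennreal (3/4) ^ (K + 1) * 4 * (\<Sum>j. ?P j))"
    by (simp only: first_sum[of ?P K, OF Pj0] double_sum)
  finally show ?thesis .
qed

end

lemma pow34_le:
  fixes x :: real
  assumes "0 < x" "x \<le> 1"
  shows "(3/4::real) ^ nat \<lceil>ln (1/x) / ln (4/3)\<rceil> \<le> x"
proof -
  define M where "M = nat \<lceil>ln (1/x) / ln (4/3)\<rceil>"
  have l43: "ln (4/3::real) > 0" by simp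
  have L0: "ln (1/x) \<ge> 0" using assms by simp
  have "real M \<ge> ln (1/x) / ln (4/3)" unfolding M_def by linarith
  then have "real M * ln (4/3) \<ge> ln (1/x)" using l43 by (simp add: divide_le_eq)
  moreover have "ln (3/4::real) = - ln (4/3)" by (simp add: ln_div)
  moreover have "ln (1/x) = - ln x" using assms by (simp add: ln_div)
  ultimately have "ln ((3/4::real) ^ M) \<le> ln x"
    by (simp add: ln_realpow)
  then show ?thesis using assms unfolding M_def by simp
qed

lemma ceil_bound: "(x::real) \<ge> 0 \<Longrightarrow> real (nat \<lceil>x / ln (4/3)\<rceil>) \<le> x / ln (4/3) + 1"
proof -
  assume "x \<ge> 0"
  then have "x / ln (4/3) \<ge> 0" by simp
  then show ?thesis by linarith
qed

lemma ln43: "ln (4/3::real) \<ge> 1/4"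
proof -
  have "ln (3/4::real) \<le> 3/4 - 1" by (rule ln_le_minus_one) auto
  moreover have "ln (3/4::real) = - ln (4/3)" by (simp add: ln_div)
  ultimately show ?thesis by simp
qed

lemma w_ln_bound:
  fixes x :: real
  assumes "0 < x" "x \<le> 1"
  shows "x * (ln (1/x) / ln (4/3) + 5) \<le> 5"
proof -
  have l: "ln (1/x) \<le> 1/x - 1" by (rule ln_le_minus_one) (use assms in simp)
  have L0: "ln (1/x) \<ge> 0" using assms by simp
  have a: "1 / ln (4/3::real) \<le> 4" using ln43 by (simp add: divide_le_eq)
  have "ln (1/x) / ln (4/3) \<le> 4 * ln (1/x)"
    using a L0 by (metis divide_inverse inverse_eq_divide mult.commute mult_right_mono)
  then have "x * (ln (1/x) / ln (4/3) + 5) \<le> x * (4 * ln (1/x) + 5)"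
    using assms by (intro mult_left_mono) auto
  also have "\<dots> \<le> x * (4 * (1/x - 1) + 5)"
    using assms l by (intro mult_left_mono) auto
  also have "\<dots> = 4 + x" using assms by (simp add: field_simps)
  also have "\<dots> \<le> 5" using assms by simp
  finally show ?thesis .
qed

theorem mainTheorem9:
  fixes r :: "real \<Rightarrow> real" and Q :: "real measure" and xs rmax \<gamma> :: real
  assumes r_meas: "r \<in> borel_measurable borel"
    and r_nonneg: "\<forall>x\<in>{0..1}. r x \<ge> 0"
    and Q_dens: "Q = density unifP (\<lambda>x. ennreal (r x))"
    and Q_prob: "prob_space Q"
    and xs_in: "xs \<in> {0..1}"
    and r_inc: "mono_on {0..xs} r"
    and r_dec: "antimono_on {xs..1} r"
    and r_bdd: "bdd_above (r ` {0..1})"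
    and rmax_def: "rmax = (SUP x\<in>{0..1}. r x)"
    and r_xs: "r xs = rmax"
    and \<gamma>_in: "\<gamma> \<in> {0..1}"
  shows "(\<integral>\<^sup>+ \<omega>. as_T r xs rmax \<omega> \<partial>rand_space)
           \<le> ennreal (2 / ln (4/3)) * (log_inv (w_width r rmax \<gamma>) + 2 * log_inv \<gamma>) + 22"
proof -
  have xs01: "0 \<le> xs" "xs \<le> 1" using xs_in by auto
  have g01: "0 \<le> \<gamma>" "\<gamma> \<le> 1" using \<gamma>_in by auto
  define ww where "ww = w_width r rmax \<gamma>"
  have wset: "1 \<in> {\<delta> \<in> {0..1}. \<exists>z\<in>{0..1}. S_level r rmax \<gamma> \<subseteq> {z..z + \<delta>}}"
    by (auto simp: S_level_def intro!: bexI[of _ 0])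
  have ww01: "0 \<le> ww" "ww \<le> 1"
    unfolding ww_def w_width_def
    using wset by (auto intro!: cInf_greatest cInf_lower bdd_belowI[of _ 0])
  have c43: "ennreal (2 / ln (4/3)) \<noteq> 0" by simp
  show ?thesis
  proof (cases "\<gamma> = 0 \<or> ww = 0")
    case True
    then have "log_inv (w_width r rmax \<gamma>) + 2 * log_inv \<gamma> = \<infinity>"
      by (auto simp: log_inv_def ww_def ennreal_mult_top)
    then have "ennreal (2 / ln (4/3)) * (log_inv (w_width r rmax \<gamma>) + 2 * log_inv \<gamma>) + 22 = \<infinity>"
    proof -
      have "ennreal (2 / ln (4/3)) * \<infinity> = \<infinity>" using c43 by (simp add: ennreal_mult_top)
      then show ?thesis by (simp only: \<open>log_inv (w_width r rmax \<gamma>) + 2 * log_inv \<gamma> = \<infinity>\<close>) simp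
    qed
    then show ?thesis by simp
  next
    case False
    then have gpos: "0 < \<gamma>" and wpos: "0 < ww" using g01 ww01 by auto
    have rle: "r x \<le> rmax" if "x \<in> {0..1}" for x
      unfolding rmax_def using r_bdd that by (intro cSUP_upper) auto
    have rpos: "rmax > 0"
    proof (rule ccontr)
      assume "\<not> rmax > 0"
      then have r0: "r x = 0" if "x \<in> {0..1}" for x using rle[OF that] r_nonneg that by force
      interpret Qp: prob_space Q by (rule Q_prob)
      have [measurable]: "(\<lambda>x. ennreal (r x)) \<in> borel_measurable borel" using r_meas by measurable
      have "emeasure Q (space Q) = (\<integral>\<^sup>+x. ennreal (r x) \<partial>unifP)"
        unfolding Q_dens by (subst emeasure_density) (auto simp: sets_unifP)
      also have "\<dots> = (\<integral>\<^sup>+x. ennreal (r x) * indicator {0..1} x \<partial>lborel)"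
        by (rule int_unifP) measurable
      also have "(\<lambda>x. ennreal (r x) * indicator {0..1} x) = (\<lambda>x. 0)"
        by (rule ext) (auto simp: indicator_def r0)
      finally show False using Qp.emeasure_space_1 by (simp del: nn_integral_indicator)
    qed
    let ?S = "S_level r rmax \<gamma>"
    let ?P = "Pj xs ?S"
    define l where "l = ln (4/3::real)"
    have lpos: "l > 0" by (simp add: l_def)
    define L where "L = ln (1 / ww)"
    define G where "G = ln (1 / \<gamma>)"
    have L0: "L \<ge> 0" using wpos ww01 by (simp add: L_def)
    have G0: "G \<ge> 0" using gpos g01 by (simp add: G_def)
    define M0 where "M0 = nat \<lceil>L / l\<rceil>"
    define N1 where "N1 = nat \<lceil>G / l\<rceil>"
    define K where "K = M0 + N1 + 2"
    have qM0: "(3/4::real) ^ M0 \<le> ww" unfolding M0_def L_def l_def by (rule pow34_le[OF wpos ww01(2)])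
    have qN1: "(3/4::real) ^ N1 \<le> \<gamma>" unfolding N1_def G_def l_def by (rule pow34_le[OF gpos g01(2)])
    have M0b: "real M0 \<le> L / l + 1" unfolding M0_def l_def by (rule ceil_bound[OF L0])
    have N1b: "real N1 \<le> G / l + 1" unfolding N1_def l_def by (rule ceil_bound[OF G0])
    have gg: "0 < \<gamma>" "\<gamma> \<le> 1" using gpos g01 by auto
    have main: "(\<integral>\<^sup>+w. as_T r xs rmax w \<partial>rand_space)
      \<le> of_nat (K + 1) + (\<Sum>j. ?P j) + ennreal (1 / \<gamma>) * (ennreal (3/4) ^ (K + 1) * 4 * (\<Sum>j. ?P j))"
      by (rule main_int_bound[OF xs01 r_meas r_inc r_dec gg r_xs rpos])
    have A_le: "(\<Sum>j. ?P j) \<le> ennreal (real M0 + 4)"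
    proof -
      have wpos': "w_width r rmax \<gamma> > 0" using wpos by (simp add: ww_def)
      have "(\<Sum>j. ?P j) = (\<Sum>i. ?P (i + M0)) + (\<Sum>j<M0. ?P j)" by (rule offset_ennreal)
      also have "(\<Sum>j<M0. ?P j) \<le> (\<Sum>j<M0. 1)"
        by (intro sum_mono Pj_le1[OF xs01 r_meas r_inc r_dec gg])
      also have "(\<Sum>i. ?P (i + M0)) \<le> (\<Sum>i. ennreal (1 / ww) * ennreal (3/4) ^ (i + M0))"
        using Pj_w[OF xs01 r_meas r_inc r_dec gg wpos'] unfolding ww_def[symmetric]
        by (intro suminf_le) auto
      also have "(\<lambda>i. ennreal (1 / ww) * ennreal (3/4) ^ (i + M0)) = (\<lambda>i. (ennreal (1 / ww) * ennreal (3/4) ^ M0) * ennreal (3/4) ^ i)"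
        by (rule ext) (simp only: power_add ac_simps)
      also have "(\<Sum>i. (ennreal (1 / ww) * ennreal (3/4) ^ M0) * ennreal (3/4) ^ i) = (ennreal (1 / ww) * ennreal (3/4) ^ M0) * 4"
        by (simp only: ennreal_suminf_cmult geom_ennreal)
      also have "ennreal (1 / ww) * ennreal (3/4) ^ M0 = ennreal (1 / ww * (3/4) ^ M0)"
      proof -
        have "ennreal (3/4) ^ M0 = ennreal ((3/4) ^ M0)" by (rule ennreal_power) simp
        moreover have "ennreal (1 / ww * (3/4) ^ M0) = ennreal (1 / ww) * ennreal ((3/4) ^ M0)"
          using wpos by (intro ennreal_mult) auto
        ultimately show ?thesis by simp
      qed
      also have "ennreal (1 / ww * (3/4) ^ M0) \<le> ennreal 1"
      proof (rule ennreal_leI)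
        show "1 / ww * (3/4) ^ M0 \<le> 1" using qM0 wpos by (simp add: divide_le_eq_1)
      qed
      finally have "(\<Sum>j. ?P j) \<le> ennreal 1 * 4 + of_nat M0" by (simp add: add_mono mult_right_mono)
      also have "\<dots> = ennreal (real M0 + 4)"
      proof -
        have "ennreal (real M0 + 4) = ennreal (real M0) + ennreal 4" by (rule ennreal_plus) auto
        then show ?thesis by (simp add: ennreal_of_nat_eq_real_of_nat add.commute)
      qed
      finally show ?thesis .
    qed
    define B where "B = real (K + 1) + (real M0 + 4) + (1 / \<gamma>) * ((3/4) ^ (K + 1) * 4 * (real M0 + 4))"
    have step1: "of_nat (K + 1) + (\<Sum>j. ?P j) + ennreal (1 / \<gamma>) * (ennreal (3/4) ^ (K + 1) * 4 * (\<Sum>j. ?P j))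
        \<le> of_nat (K + 1) + ennreal (real M0 + 4) + ennreal (1 / \<gamma>) * (ennreal (3/4) ^ (K + 1) * 4 * ennreal (real M0 + 4))"
      by (intro add_mono mult_left_mono A_le order_refl) auto
    have step2: "of_nat (K + 1) + ennreal (real M0 + 4) + ennreal (1 / \<gamma>) * (ennreal (3/4) ^ (K + 1) * 4 * ennreal (real M0 + 4)) = ennreal B"
    proof -
      define x1 where "x1 = (3/4::real) ^ (K + 1) * 4 * (real M0 + 4)"
      have x1: "0 \<le> x1" by (simp add: x1_def)
      have e1: "ennreal (3/4) ^ (K + 1) = ennreal ((3/4) ^ (K + 1))" by (rule ennreal_power) simp
      have e2: "ennreal ((3/4) ^ (K + 1)) * 4 = ennreal ((3/4) ^ (K + 1) * 4)"
        by (subst ennreal_mult) auto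
      have e3: "ennreal ((3/4) ^ (K + 1) * 4) * ennreal (real M0 + 4) = ennreal x1"
        unfolding x1_def by (subst ennreal_mult[symmetric]) auto
      have e4: "ennreal (1 / \<gamma>) * ennreal x1 = ennreal (1 / \<gamma> * x1)"
        using gpos x1 by (subst ennreal_mult[symmetric]) auto
      have e5: "of_nat (K + 1) = ennreal (real (K + 1))" by (simp add: ennreal_of_nat_eq_real_of_nat)
      have e6: "ennreal (real (K + 1)) + ennreal (real M0 + 4) = ennreal (real (K + 1) + (real M0 + 4))"
        by (subst ennreal_plus) auto
      have e7: "ennreal (real (K + 1) + (real M0 + 4)) + ennreal (1 / \<gamma> * x1) = ennreal B"
        unfolding B_def x1_def using gpos by (subst ennreal_plus[symmetric]) auto
      show ?thesis
        by (simp only: e1 e2 e3 e4 e5 e6 e7)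
    qed
    define R where "R = 2 / l * (L + 2 * G) + 22"
    have Beq: "B \<le> R"
    proof -
      have q: "(3/4::real) ^ (K + 1) = (3/4) ^ M0 * (3/4) ^ N1 * (27/64)"
        by (simp add: K_def power_add)
      have "(3/4::real) ^ (K + 1) \<le> ww * \<gamma> * (27/64)"
        unfolding q using qM0 qN1 ww01 by (intro mult_right_mono mult_mono) auto
      then have "(1 / \<gamma>) * ((3/4) ^ (K + 1) * 4 * (real M0 + 4)) \<le> (1 / \<gamma>) * ((ww * \<gamma> * (27/64)) * 4 * (real M0 + 4))"
        using gpos by (intro mult_left_mono mult_right_mono) auto
      also have "\<dots> = (27/16) * (ww * (real M0 + 4))" using gpos by (simp add: field_simps)
      also have "\<dots> \<le> (27/16) * (ww * (L / l + 5))"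
        using M0b wpos by (intro mult_left_mono) auto
      also have "\<dots> \<le> (27/16) * 5"
        using w_ln_bound[OF wpos ww01(2)] by (simp add: L_def l_def)
      finally have t: "(1 / \<gamma>) * ((3/4) ^ (K + 1) * 4 * (real M0 + 4)) \<le> 135/16" by simp
      have Gl: "G / l \<ge> 0" using G0 lpos by simp
      have R2: "R = 2 * (L / l) + 4 * (G / l) + 22"
        unfolding R_def using lpos by (simp add: field_simps)
      have B2: "B = real M0 + real N1 + 3 + (real M0 + 4) + (1 / \<gamma>) * ((3/4) ^ (K + 1) * 4 * (real M0 + 4))"
        unfolding B_def K_def by simp
      show ?thesis unfolding R2 B2 using t Gl M0b N1b by linarith
    qed
    have Req: "ennreal (2 / ln (4/3)) * (log_inv (w_width r rmax \<gamma>) + 2 * log_inv \<gamma>) + 22 = ennreal R"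
    proof -
      have b1: "log_inv (w_width r rmax \<gamma>) = ennreal L" using wpos by (simp add: log_inv_def L_def ww_def)
      have b2: "log_inv \<gamma> = ennreal G" using gpos by (simp add: log_inv_def G_def)
      show ?thesis
      proof -
        have a1: "2 * ennreal G = ennreal (2 * G)" using G0 by (simp add: ennreal_mult)
        have a2: "ennreal L + ennreal (2 * G) = ennreal (L + 2 * G)" using L0 G0 by (subst ennreal_plus) auto
        have a3: "ennreal (2 / l) * ennreal (L + 2 * G) = ennreal (2 / l * (L + 2 * G))"
          using L0 G0 lpos by (subst ennreal_mult[symmetric]) auto
        have a4: "ennreal (2 / l * (L + 2 * G)) + 22 = ennreal R"
          unfolding R_def using L0 G0 lpos by (subst ennreal_plus) auto
        show ?thesis unfolding l_def[symmetric] b1 b2 by (simp only: a1 a2 a3 a4)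
      qed
    qed
    have "(\<integral>\<^sup>+w. as_T r xs rmax w \<partial>rand_space) \<le> ennreal B"
      using order_trans[OF main step1] by (simp only: step2)
    also have "\<dots> \<le> ennreal R" using Beq by (rule ennreal_leI)
    finally show ?thesis using Req by simp
  qed
qed

end
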